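(* Let $(\mathcal R,\Sigma,\Delta)$ be a right triangulated category with right semi-equivalence. Then $\mathcal R$, identified with the full subcategory of $\mathcal S(\mathcal R)$ consisting of objects isomorphic to some $(A,0)$ with $A\in\mathcal R$, is closed under extensions in the triangulated category $\mathcal S(\mathcal R)$: for every triangle $X\to Y\to Z\to\Sigma X$ in $\mathcal S(\mathcal R)$ with $X,Z\in\mathcal R$, also $Y\in\mathcal R$.
   Context: A right triangulated category $(\mathcal R,\Sigma,\Delta)$: additive category, additive endofunctor $\Sigma$, class of right triangles $A\to B\to C\to\Sigma A$ satisfying the axioms of a triangulated category except that $\Sigma$ need not be an equivalence and only rotation to the right is required. $\Sigma$ is a right semi-equivalence if fully faithful with essential image $\Sigma\mathcal R$ closed under extensions in right triangles. Stabilisation (for fully faithful $\Sigma$): $\mathcal S(\mathcal R)$ has objects $(A,n)$ with $A\in\mathcal R$, $n\in\mathbb Z$, morphisms $\mathcal S(\mathcal R)((A,n),(B,m))=\mathcal R(\Sigma^{n-k}A,\Sigma^{m-k}B)$ for any $k\le\min\{n,m\}$, shift $\Sigma(A,n)=(A,n+1)$, and triangles the sequences isomorphic to $(A,n)\xrightarrow{x}(B,m)\xrightarrow{y}(C,l)\xrightarrow{z}(A,n+1)$ such that for some (equivalently, when $\Sigma$ is a right semi-equivalence, every) $k\le\min\{n,m,l\}$ the sequence $\Sigma^{n-k}A\to\Sigma^{m-k}B\to\Sigma^{l-k}C\to\Sigma^{n+1-k}A$ with maps $(-1)^k$ times the representatives of $x,y,z$ is a right triangle in $\mathcal R$. $\mathcal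 S(\mathcal R)$ is triangulated. *)

theory Defs
  imports Main
begin

text \<open>A right triangulated category is encoded as a record: objects of type 'o,
morphisms of type 'm, hom-sets, composition (cmp g f = g after f), identities,
the preadditive structure (addition, negation, zero morphisms), the endofunctor
Sigma (on objects shO, on morphisms shM) and the class of right triangles Tri,
whose elements are tuples (A, B, C, f, g, h) standing for A -f-> B -g-> C -h-> Sigma A.\<close>

record ('o, 'm) rtcat =
  Ob    :: "'o set"
  Hom   :: "'o \<Rightarrow> 'o \<Rightarrow> 'm set"
  cmp   :: "'m \<Rightarrow> 'm \<Rightarrow> 'm"
  idm   :: "'o \<Rightarrow> 'm"
  madd  :: "'m \<Rightarrow> 'm \<Rightarrow> 'm"
  mneg  :: "'m \<Rightarrow> 'm"
  mzero :: "'o \<Rightarrow> 'o \<Rightarrow> 'm"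
  shO   :: "'o \<Rightarrow> 'o"
  shM   :: "'m \<Rightarrow> 'm"
  Tri   :: "('o \<times> 'o \<times> 'o \<times> 'm \<times> 'm \<times> 'm) set"

definition is_category :: "('o, 'm, 'x) rtcat_scheme \<Rightarrow> bool" where
  "is_category R \<longleftrightarrow>
     (\<forall>A\<in>Ob R. \<forall>B\<in>Ob R. \<forall>C\<in>Ob R. \<forall>f g.
        f \<in> Hom R A B \<longrightarrow> g \<in> Hom R B C \<longrightarrow> cmp R g f \<in> Hom R A C) \<and>
     (\<forall>A\<in>Ob R. \<forall>B\<in>Ob R. \<forall>C\<in>Ob R. \<forall>D\<in>Ob R. \<forall>f g h.
        f \<in> Hom R A B \<longrightarrow> g \<in> Hom R B C \<longrightarrow> h \<in> Hom R C D \<longrightarrow>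
        cmp R h (cmp R g f) = cmp R (cmp R h g) f) \<and>
     (\<forall>A\<in>Ob R. idm R A \<in> Hom R A A) \<and>
     (\<forall>A\<in>Ob R. \<forall>B\<in>Ob R. \<forall>f. f \<in> Hom R A B \<longrightarrow>
        cmp R (idm R B) f = f \<and> cmp R f (idm R A) = f)"

definition is_preadditive :: "('o, 'm, 'x) rtcat_scheme \<Rightarrow> bool" where
  "is_preadditive R \<longleftrightarrow>
     (\<forall>A\<in>Ob R. \<forall>B\<in>Ob R.
        mzero R A B \<in> Hom R A B \<and>
        (\<forall>f g. f \<in> Hom R A B \<longrightarrow> g \<in> Hom R A B \<longrightarrow> madd R f g \<in> Hom R A B) \<and>
        (\<forall>f. f \<in> Hom R A B \<longrightarrow> mneg R f \<in> Hom R A B) \<and>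
        (\<forall>f g h. f \<in> Hom R A B \<longrightarrow> g \<in> Hom R A B \<longrightarrow> h \<in> Hom R A B \<longrightarrow>
           madd R (madd R f g) h = madd R f (madd R g h)) \<and>
        (\<forall>f g. f \<in> Hom R A B \<longrightarrow> g \<in> Hom R A B \<longrightarrow> madd R f g = madd R g f) \<and>
        (\<forall>f. f \<in> Hom R A B \<longrightarrow> madd R f (mzero R A B) = f) \<and>
        (\<forall>f. f \<in> Hom R A B \<longrightarrow> madd R f (mneg R f) = mzero R A B)) \<and>
     (\<forall>A\<in>Ob R. \<forall>B\<in>Ob R. \<forall>C\<in>Ob R. \<forall>f f' g.
        f \<in> Hom R A B \<longrightarrow> f' \<in> Hom R A B \<longrightarrow> g \<in> Hom R B C \<longrightarrow>
        cmp R g (madd R f f') = madd R (cmp R g f) (cmp R g f')) \<and>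
     (\<forall>A\<in>Ob R. \<forall>B\<in>Ob R. \<forall>C\<in>Ob R. \<forall>f g g'.
        f \<in> Hom R A B \<longrightarrow> g \<in> Hom R B C \<longrightarrow> g' \<in> Hom R B C \<longrightarrow>
        cmp R (madd R g g') f = madd R (cmp R g f) (cmp R g' f))"

definition is_zero_obj :: "('o, 'm, 'x) rtcat_scheme \<Rightarrow> 'o \<Rightarrow> bool" where
  "is_zero_obj R Z \<longleftrightarrow> Z \<in> Ob R \<and>
     (\<forall>A\<in>Ob R. (\<exists>!f. f \<in> Hom R A Z) \<and> (\<exists>!f. f \<in> Hom R Z A))"

definition has_biproducts :: "('o, 'm, 'x) rtcat_scheme \<Rightarrow> bool" where
  "has_biproducts R \<longleftrightarrow>
     (\<forall>A\<in>Ob R. \<forall>B\<in>Ob R. \<exists>P\<in>Ob R. \<exists>i1 i2 p1 p2.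
        i1 \<in> Hom R A P \<and> i2 \<in> Hom R B P \<and> p1 \<in> Hom R P A \<and> p2 \<in> Hom R P B \<and>
        cmp R p1 i1 = idm R A \<and> cmp R p2 i2 = idm R B \<and>
        cmp R p1 i2 = mzero R B A \<and> cmp R p2 i1 = mzero R A B \<and>
        madd R (cmp R i1 p1) (cmp R i2 p2) = idm R P)"

definition is_additive :: "('o, 'm, 'x) rtcat_scheme \<Rightarrow> bool" where
  "is_additive R \<longleftrightarrow> is_category R \<and> is_preadditive R \<and>
     (\<exists>Z. is_zero_obj R Z) \<and> has_biproducts R"

definition additive_shift :: "('o, 'm, 'x) rtcat_scheme \<Rightarrow> bool" where
  "additive_shift R \<longleftrightarrow>
     (\<forall>A\<in>Ob R. shO R A \<in> Ob R) \<and>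
     (\<forall>A\<in>Ob R. \<forall>B\<in>Ob R. \<forall>f. f \<in> Hom R A B \<longrightarrow> shM R f \<in> Hom R (shO R A) (shO R B)) \<and>
     (\<forall>A\<in>Ob R. shM R (idm R A) = idm R (shO R A)) \<and>
     (\<forall>A\<in>Ob R. \<forall>B\<in>Ob R. \<forall>C\<in>Ob R. \<forall>f g.
        f \<in> Hom R A B \<longrightarrow> g \<in> Hom R B C \<longrightarrow> shM R (cmp R g f) = cmp R (shM R g) (shM R f)) \<and>
     (\<forall>A\<in>Ob R. \<forall>B\<in>Ob R. \<forall>f g.
        f \<in> Hom R A B \<longrightarrow> g \<in> Hom R A B \<longrightarrow> shM R (madd R f g) = madd R (shM R f) (shM R g))"

definition iso_mor :: "('o, 'm, 'x) rtcat_scheme \<Rightarrow> 'o \<Rightarrow> 'o \<Rightarrow> 'm \<Rightarrow> bool" where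
  "iso_mor R A B f \<longleftrightarrow> f \<in> Hom R A B \<and>
     (\<exists>g. g \<in> Hom R B A \<and> cmp R g f = idm R A \<and> cmp R f g = idm R B)"

definition isomorphic :: "('o, 'm, 'x) rtcat_scheme \<Rightarrow> 'o \<Rightarrow> 'o \<Rightarrow> bool" where
  "isomorphic R A B \<longleftrightarrow> A \<in> Ob R \<and> B \<in> Ob R \<and> (\<exists>f. iso_mor R A B f)"

definition well_typed_tri :: "('o, 'm, 'x) rtcat_scheme \<Rightarrow> 'o \<times> 'o \<times> 'o \<times> 'm \<times> 'm \<times> 'm \<Rightarrow> bool" where
  "well_typed_tri R t \<longleftrightarrow> (case t of (A, B, C, f, g, h) \<Rightarrow>
     A \<in> Ob R \<and> B \<in> Ob R \<and> C \<in> Ob R \<and>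
     f \<in> Hom R A B \<and> g \<in> Hom R B C \<and> h \<in> Hom R C (shO R A))"

definition right_triangulated :: "('o, 'm, 'x) rtcat_scheme \<Rightarrow> bool" where
  "right_triangulated R \<longleftrightarrow>
     is_additive R \<and> additive_shift R \<and>
     (\<forall>t\<in>Tri R. well_typed_tri R t) \<and>
     \<comment> \<open>RT1 (a): closed under isomorphisms of triangles\<close>
     (\<forall>A B C f g h A' B' C' f' g' h' a b c.
        (A, B, C, f, g, h) \<in> Tri R \<longrightarrow> well_typed_tri R (A', B', C', f', g', h') \<longrightarrow>
        iso_mor R A A' a \<longrightarrow> iso_mor R B B' b \<longrightarrow> iso_mor R C C' c \<longrightarrow>
        cmp R b f = cmp R f' a \<longrightarrow> cmp R c g = cmp R g' b \<longrightarrow>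
        cmp R (shM R a) h = cmp R h' c \<longrightarrow>
        (A', B', C', f', g', h') \<in> Tri R) \<and>
     \<comment> \<open>RT1 (b): A -> A -> 0 -> Sigma A\<close>
     (\<forall>A\<in>Ob R. \<forall>Z. is_zero_obj R Z \<longrightarrow>
        (A, A, Z, idm R A, mzero R A Z, mzero R Z (shO R A)) \<in> Tri R) \<and>
     \<comment> \<open>RT1 (c): every morphism embeds in a right triangle\<close>
     (\<forall>A\<in>Ob R. \<forall>B\<in>Ob R. \<forall>f. f \<in> Hom R A B \<longrightarrow> (\<exists>C g h. (A, B, C, f, g, h) \<in> Tri R)) \<and>
     \<comment> \<open>RT2: rotation to the right\<close>
     (\<forall>A B C f g h. (A, B, C, f, g, h) \<in> Tri R \<longrightarrow>
        (B, C, shO R A, g, h, mneg R (shM R f)) \<in> Tri R) \<and>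
     \<comment> \<open>RT3: morphism axiom\<close>
     (\<forall>A B C f g h A' B' C' f' g' h' a b.
        (A, B, C, f, g, h) \<in> Tri R \<longrightarrow> (A', B', C', f', g', h') \<in> Tri R \<longrightarrow>
        a \<in> Hom R A A' \<longrightarrow> b \<in> Hom R B B' \<longrightarrow> cmp R b f = cmp R f' a \<longrightarrow>
        (\<exists>c. c \<in> Hom R C C' \<and> cmp R c g = cmp R g' b \<and> cmp R (shM R a) h = cmp R h' c)) \<and>
     \<comment> \<open>RT4: octahedral axiom\<close>
     (\<forall>X Y Z Z' X' Y' x u d y j i v e.
        (X, Y, Z', x, u, d) \<in> Tri R \<longrightarrow>
        (Y, Z, X', y, j, i) \<in> Tri R \<longrightarrow>
        (X, Z, Y', cmp R y x, v, e) \<in> Tri R \<longrightarrow>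
        (\<exists>f g. f \<in> Hom R Z' Y' \<and> g \<in> Hom R Y' X' \<and>
           (Z', Y', X', f, g, cmp R (shM R u) i) \<in> Tri R \<and>
           cmp R f u = cmp R v y \<and> cmp R e f = d \<and>
           cmp R g v = j \<and> cmp R i g = cmp R (shM R x) e))"

definition ess_image_shift :: "('o, 'm, 'x) rtcat_scheme \<Rightarrow> 'o set" where
  "ess_image_shift R = {X \<in> Ob R. \<exists>Y\<in>Ob R. isomorphic R X (shO R Y)}"

definition right_semi_equivalence :: "('o, 'm, 'x) rtcat_scheme \<Rightarrow> bool" where
  "right_semi_equivalence R \<longleftrightarrow>
     (\<forall>A\<in>Ob R. \<forall>B\<in>Ob R. bij_betw (shM R) (Hom R A B) (Hom R (shO R A) (shO R B))) \<and>
     (\<forall>A B C f g h. (A, B, C, f, g, h) \<in> Tri R \<longrightarrow>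
        A \<in> ess_image_shift R \<longrightarrow> C \<in> ess_image_shift R \<longrightarrow> B \<in> ess_image_shift R)"

text \<open>A morphism (A,n) -> (B,m) is represented by a pair (k, f) with k \<le> min n m and
f \<in> R(Sigma^(n-k) A, Sigma^(m-k) B); two representatives are identified when they
agree after applying Sigma down to a common level (this is the identification
R(Sigma^(n-k)A, Sigma^(m-k)B) = R(Sigma^(n-k+1)A, Sigma^(m-k+1)B) via Sigma).\<close>

definition lvl :: "('o, 'm, 'x) rtcat_scheme \<Rightarrow> int \<Rightarrow> 'o \<times> int \<Rightarrow> 'o" where
  "lvl R k X = (shO R ^^ nat (snd X - k)) (fst X)"

definition at_lvl :: "('o, 'm, 'x) rtcat_scheme \<Rightarrow> int \<Rightarrow> int \<times> 'm \<Rightarrow> 'm" where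
  "at_lvl R j u = (shM R ^^ nat (fst u - j)) (snd u)"

definition S_obj :: "('o, 'm, 'x) rtcat_scheme \<Rightarrow> 'o \<times> int \<Rightarrow> bool" where
  "S_obj R X \<longleftrightarrow> fst X \<in> Ob R"

definition S_hom :: "('o, 'm, 'x) rtcat_scheme \<Rightarrow> 'o \<times> int \<Rightarrow> 'o \<times> int \<Rightarrow> int \<times> 'm \<Rightarrow> bool" where
  "S_hom R X Y u \<longleftrightarrow> S_obj R X \<and> S_obj R Y \<and> fst u \<le> snd X \<and> fst u \<le> snd Y \<and>
     snd u \<in> Hom R (lvl R (fst u) X) (lvl R (fst u) Y)"

definition S_eq :: "('o, 'm, 'x) rtcat_scheme \<Rightarrow> int \<times> 'm \<Rightarrow> int \<times> 'm \<Rightarrow> bool" where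
  "S_eq R u v \<longleftrightarrow> at_lvl R (min (fst u) (fst v)) u = at_lvl R (min (fst u) (fst v)) v"

definition S_comp :: "('o, 'm, 'x) rtcat_scheme \<Rightarrow> int \<times> 'm \<Rightarrow> int \<times> 'm \<Rightarrow> int \<times> 'm" where
  "S_comp R v u = (let j = min (fst u) (fst v) in (j, cmp R (at_lvl R j v) (at_lvl R j u)))"

definition S_id :: "('o, 'm, 'x) rtcat_scheme \<Rightarrow> 'o \<times> int \<Rightarrow> int \<times> 'm" where
  "S_id R X = (snd X, idm R (fst X))"

definition S_shift_obj :: "'o \<times> int \<Rightarrow> 'o \<times> int" where
  "S_shift_obj X = (fst X, snd X + 1)"

definition S_shift_mor :: "int \<times> 'm \<Rightarrow> int \<times> 'm" where
  "S_shift_mor u = (fst u + 1, snd u)"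

definition S_iso :: "('o, 'm, 'x) rtcat_scheme \<Rightarrow> 'o \<times> int \<Rightarrow> 'o \<times> int \<Rightarrow> int \<times> 'm \<Rightarrow> bool" where
  "S_iso R X Y a \<longleftrightarrow> S_hom R X Y a \<and>
     (\<exists>b. S_hom R Y X b \<and> S_eq R (S_comp R b a) (S_id R X) \<and> S_eq R (S_comp R a b) (S_id R Y))"

definition S_isomorphic :: "('o, 'm, 'x) rtcat_scheme \<Rightarrow> 'o \<times> int \<Rightarrow> 'o \<times> int \<Rightarrow> bool" where
  "S_isomorphic R X Y \<longleftrightarrow> (\<exists>a. S_iso R X Y a)"

definition sgn_mor :: "('o, 'm, 'x) rtcat_scheme \<Rightarrow> int \<Rightarrow> 'm \<Rightarrow> 'm" where
  "sgn_mor R k f = (if even k then f else mneg R f)"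

definition S_std_tri :: "('o, 'm, 'x) rtcat_scheme \<Rightarrow> 'o \<times> int \<Rightarrow> 'o \<times> int \<Rightarrow> 'o \<times> int \<Rightarrow>
    int \<times> 'm \<Rightarrow> int \<times> 'm \<Rightarrow> int \<times> 'm \<Rightarrow> bool" where
  "S_std_tri R X Y Z x y z \<longleftrightarrow>
     S_hom R X Y x \<and> S_hom R Y Z y \<and> S_hom R Z (S_shift_obj X) z \<and>
     (\<exists>k x0 y0 z0. k \<le> snd X \<and> k \<le> snd Y \<and> k \<le> snd Z \<and>
        S_hom R X Y (k, x0) \<and> S_hom R Y Z (k, y0) \<and> S_hom R Z (S_shift_obj X) (k, z0) \<and>
        S_eq R x (k, x0) \<and> S_eq R y (k, y0) \<and> S_eq R z (k, z0) \<and>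
        (lvl R k X, lvl R k Y, lvl R k Z, sgn_mor R k x0, sgn_mor R k y0, sgn_mor R k z0) \<in> Tri R)"

definition S_tri :: "('o, 'm, 'x) rtcat_scheme \<Rightarrow> 'o \<times> int \<Rightarrow> 'o \<times> int \<Rightarrow> 'o \<times> int \<Rightarrow>
    int \<times> 'm \<Rightarrow> int \<times> 'm \<Rightarrow> int \<times> 'm \<Rightarrow> bool" where
  "S_tri R X Y Z x y z \<longleftrightarrow>
     S_hom R X Y x \<and> S_hom R Y Z y \<and> S_hom R Z (S_shift_obj X) z \<and>
     (\<exists>X' Y' Z' x' y' z' a b c.
        S_std_tri R X' Y' Z' x' y' z' \<and>
        S_iso R X X' a \<and> S_iso R Y Y' b \<and> S_iso R Z Z' c \<and>
        S_eq R (S_comp R b x) (S_comp R x' a) \<and>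
        S_eq R (S_comp R c y) (S_comp R y' b) \<and>
        S_eq R (S_comp R (S_shift_mor a) z) (S_comp R z' c))"

definition in_R :: "('o, 'm, 'x) rtcat_scheme \<Rightarrow> 'o \<times> int \<Rightarrow> bool" where
  "in_R R X \<longleftrightarrow> (\<exists>A\<in>Ob R. S_isomorphic R X (A, 0))"

end

theory Submission imports Defs begin

locale RTS = fixes R :: "('o,'m) rtcat"
  assumes rt: "right_triangulated R" and rse: "right_semi_equivalence R"
begin

abbreviation cm (infixr "\<cdot>" 70) where "g \<cdot> f \<equiv> cmp R g f"
abbreviation pl (infixl "\<oplus>" 65) where "f \<oplus> g \<equiv> madd R f g"
abbreviation ng where "ng f \<equiv> mneg R f"
abbreviation z where "z A B \<equiv> mzero R A B"
abbreviation S where "S f \<equiv> shM R f"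
abbreviation SO where "SO A \<equiv> shO R A"

lemma CAT: "is_category R" using rt unfolding right_triangulated_def is_additive_def by blast
lemma comp_hom: "\<lbrakk>A\<in>Ob R; B\<in>Ob R; C\<in>Ob R; f \<in> Hom R A B; g \<in> Hom R B C\<rbrakk> \<Longrightarrow> g\<cdot>f \<in> Hom R A C"
  using CAT unfolding is_category_def by blast
lemma assoc: "\<lbrakk>A\<in>Ob R; B\<in>Ob R; C\<in>Ob R; D\<in>Ob R; f \<in> Hom R A B; g \<in> Hom R B C; h \<in> Hom R C D\<rbrakk> \<Longrightarrow> h\<cdot>(g\<cdot>f) = (h\<cdot>g)\<cdot>f"
  using CAT unfolding is_category_def by blast
lemma id_hom: "A\<in>Ob R \<Longrightarrow> idm R A \<in> Hom R A A"
  using CAT unfolding is_category_def by blast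
lemma id_l: "\<lbrakk>A\<in>Ob R; B\<in>Ob R; f \<in> Hom R A B\<rbrakk> \<Longrightarrow> idm R B \<cdot> f = f"
  using CAT unfolding is_category_def by blast
lemma id_r: "\<lbrakk>A\<in>Ob R; B\<in>Ob R; f \<in> Hom R A B\<rbrakk> \<Longrightarrow> f \<cdot> idm R A = f"
  using CAT unfolding is_category_def by blast

lemma PA: "is_preadditive R" using rt unfolding right_triangulated_def is_additive_def by blast

lemma PA1: "\<forall>A\<in>Ob R. \<forall>B\<in>Ob R.
        mzero R A B \<in> Hom R A B \<and>
        (\<forall>f g. f \<in> Hom R A B \<longrightarrow> g \<in> Hom R A B \<longrightarrow> madd R f g \<in> Hom R A B) \<and>
        (\<forall>f. f \<in> Hom R A B \<longrightarrow> mneg R f \<in> Hom R A B) \<and>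
        (\<forall>f g h. f \<in> Hom R A B \<longrightarrow> g \<in> Hom R A B \<longrightarrow> h \<in> Hom R A B \<longrightarrow>
           madd R (madd R f g) h = madd R f (madd R g h)) \<and>
        (\<forall>f g. f \<in> Hom R A B \<longrightarrow> g \<in> Hom R A B \<longrightarrow> madd R f g = madd R g f) \<and>
        (\<forall>f. f \<in> Hom R A B \<longrightarrow> madd R f (mzero R A B) = f) \<and>
        (\<forall>f. f \<in> Hom R A B \<longrightarrow> madd R f (mneg R f) = mzero R A B)"
  using PA unfolding is_preadditive_def by (rule conjunct1)
lemma PA2: assumes "A\<in>Ob R" "B\<in>Ob R" shows "mzero R A B \<in> Hom R A B \<and>
        (\<forall>f g. f \<in> Hom R A B \<longrightarrow> g \<in> Hom R A B \<longrightarrow> madd R f g \<in> Hom R A B) \<and>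
        (\<forall>f. f \<in> Hom R A B \<longrightarrow> mneg R f \<in> Hom R A B) \<and>
        (\<forall>f g h. f \<in> Hom R A B \<longrightarrow> g \<in> Hom R A B \<longrightarrow> h \<in> Hom R A B \<longrightarrow>
           madd R (madd R f g) h = madd R f (madd R g h)) \<and>
        (\<forall>f g. f \<in> Hom R A B \<longrightarrow> g \<in> Hom R A B \<longrightarrow> madd R f g = madd R g f) \<and>
        (\<forall>f. f \<in> Hom R A B \<longrightarrow> madd R f (mzero R A B) = f) \<and>
        (\<forall>f. f \<in> Hom R A B \<longrightarrow> madd R f (mneg R f) = mzero R A B)"
  using bspec[OF bspec[OF PA1 assms(1)] assms(2)] .
lemmas zero_hom = PA2[THEN conjunct1]
lemmas add_hom = PA2[THEN conjunct2, THEN conjunct1, rule_format]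
lemmas neg_hom = PA2[THEN conjunct2, THEN conjunct2, THEN conjunct1, rule_format]
lemmas add_assoc = PA2[THEN conjunct2, THEN conjunct2, THEN conjunct2, THEN conjunct1, rule_format]
lemmas add_comm = PA2[THEN conjunct2, THEN conjunct2, THEN conjunct2, THEN conjunct2, THEN conjunct1, rule_format]
lemmas add_zero = PA2[THEN conjunct2, THEN conjunct2, THEN conjunct2, THEN conjunct2, THEN conjunct2, THEN conjunct1, rule_format]
lemmas add_neg = PA2[THEN conjunct2, THEN conjunct2, THEN conjunct2, THEN conjunct2, THEN conjunct2, THEN conjunct2, rule_format]
lemma comp_add_r: "\<lbrakk>A\<in>Ob R; B\<in>Ob R; C\<in>Ob R; f \<in> Hom R A B; f' \<in> Hom R A B; g \<in> Hom R B C\<rbrakk> \<Longrightarrow> g \<cdot> (f \<oplus> f') = g\<cdot>f \<oplus> g\<cdot>f'"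
  using PA unfolding is_preadditive_def by simp
lemma comp_add_l: "\<lbrakk>A\<in>Ob R; B\<in>Ob R; C\<in>Ob R; f \<in> Hom R A B; g \<in> Hom R B C; g' \<in> Hom R B C\<rbrakk> \<Longrightarrow> (g \<oplus> g') \<cdot> f = g\<cdot>f \<oplus> g'\<cdot>f"
  using PA unfolding is_preadditive_def by simp

lemma zero_obj: "\<exists>Zr. is_zero_obj R Zr"
  using rt unfolding right_triangulated_def is_additive_def by blast
lemma zero_obj_Ob: "is_zero_obj R Zr \<Longrightarrow> Zr \<in> Ob R" unfolding is_zero_obj_def by blast

lemma ASH: "additive_shift R" using rt unfolding right_triangulated_def by (rule conjunct1[OF conjunct2])
lemma sh_ob: "A\<in>Ob R \<Longrightarrow> SO A \<in> Ob R"
  using ASH unfolding additive_shift_def by blast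
lemma sh_hom: "\<lbrakk>A\<in>Ob R; B\<in>Ob R; f \<in> Hom R A B\<rbrakk> \<Longrightarrow> S f \<in> Hom R (SO A) (SO B)"
  using ASH unfolding additive_shift_def by blast
lemma sh_id: "A\<in>Ob R \<Longrightarrow> S (idm R A) = idm R (SO A)"
  using ASH unfolding additive_shift_def by blast
lemma sh_comp: "\<lbrakk>A\<in>Ob R; B\<in>Ob R; C\<in>Ob R; f \<in> Hom R A B; g \<in> Hom R B C\<rbrakk> \<Longrightarrow> S (g\<cdot>f) = S g \<cdot> S f"
  using ASH unfolding additive_shift_def by blast

lemma RT_tri:
  "\<forall>t\<in>Tri R. well_typed_tri R t"
  "\<forall>A\<in>Ob R. \<forall>Z. is_zero_obj R Z \<longrightarrow>
        (A, A, Z, idm R A, mzero R A Z, mzero R Z (shO R A)) \<in> Tri R"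
  "\<forall>A\<in>Ob R. \<forall>B\<in>Ob R. \<forall>f. f \<in> Hom R A B \<longrightarrow> (\<exists>C g h. (A, B, C, f, g, h) \<in> Tri R)"
  "\<forall>A B C f g h. (A, B, C, f, g, h) \<in> Tri R \<longrightarrow>
        (B, C, shO R A, g, h, mneg R (shM R f)) \<in> Tri R"
  "\<forall>A B C f g h A' B' C' f' g' h' a b.
        (A, B, C, f, g, h) \<in> Tri R \<longrightarrow> (A', B', C', f', g', h') \<in> Tri R \<longrightarrow>
        a \<in> Hom R A A' \<longrightarrow> b \<in> Hom R B B' \<longrightarrow> cmp R b f = cmp R f' a \<longrightarrow>
        (\<exists>c. c \<in> Hom R C C' \<and> cmp R c g = cmp R g' b \<and> cmp R (shM R a) h = cmp R h' c)"
  using rt unfolding right_triangulated_def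
  apply -
  apply (drule conjunct2, drule conjunct2, erule conjunct1)
  apply (drule conjunct2, drule conjunct2, drule conjunct2, drule conjunct2, erule conjunct1)
  apply (drule conjunct2, drule conjunct2, drule conjunct2, drule conjunct2, drule conjunct2, erule conjunct1)
  apply (drule conjunct2, drule conjunct2, drule conjunct2, drule conjunct2, drule conjunct2, drule conjunct2, erule conjunct1)
  apply (drule conjunct2, drule conjunct2, drule conjunct2, drule conjunct2, drule conjunct2, drule conjunct2, drule conjunct2, erule conjunct1)
  done

lemma tri_wt: "(A,B,C,f,g,h) \<in> Tri R \<Longrightarrow> A\<in>Ob R \<and> B\<in>Ob R \<and> C\<in>Ob R \<and> f \<in> Hom R A B \<and> g \<in> Hom R B C \<and> h \<in> Hom R C (SO A)"
  using RT_tri(1) unfolding well_typed_tri_def by fastforce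
lemma tri_triv: "\<lbrakk>A\<in>Ob R; is_zero_obj R Zr\<rbrakk> \<Longrightarrow> (A, A, Zr, idm R A, z A Zr, z Zr (SO A)) \<in> Tri R"
  using RT_tri(2) by blast
lemma tri_ex: "\<lbrakk>A\<in>Ob R; B\<in>Ob R; f \<in> Hom R A B\<rbrakk> \<Longrightarrow> \<exists>C g h. (A,B,C,f,g,h) \<in> Tri R"
  using RT_tri(3) by blast
lemma tri_rot: "(A,B,C,f,g,h) \<in> Tri R \<Longrightarrow> (B, C, SO A, g, h, ng (S f)) \<in> Tri R"
  using RT_tri(4) by blast
lemma tri_mor: "\<lbrakk>(A,B,C,f,g,h) \<in> Tri R; (A',B',C',f',g',h') \<in> Tri R; a \<in> Hom R A A'; b \<in> Hom R B B'; b\<cdot>f = f'\<cdot>a\<rbrakk>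
   \<Longrightarrow> \<exists>c. c \<in> Hom R C C' \<and> c\<cdot>g = g'\<cdot>b \<and> S a \<cdot> h = h' \<cdot> c"
  using RT_tri(5) by blast

lemma sh_bij: "\<lbrakk>A\<in>Ob R; B\<in>Ob R\<rbrakk> \<Longrightarrow> bij_betw S (Hom R A B) (Hom R (SO A) (SO B))"
  using rse unfolding right_semi_equivalence_def by blast
lemma ess_closed: "\<lbrakk>(A,B,C,f,g,h) \<in> Tri R; A \<in> ess_image_shift R; C \<in> ess_image_shift R\<rbrakk> \<Longrightarrow> B \<in> ess_image_shift R"
  using rse unfolding right_semi_equivalence_def by blast


lemma zero_add: "\<lbrakk>A\<in>Ob R; B\<in>Ob R; f\<in>Hom R A B\<rbrakk> \<Longrightarrow> z A B \<oplus> f = f"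
  by (metis add_comm add_zero zero_hom)
lemma neg_add: "\<lbrakk>A\<in>Ob R; B\<in>Ob R; f\<in>Hom R A B\<rbrakk> \<Longrightarrow> ng f \<oplus> f = z A B"
  by (metis add_comm add_neg neg_hom)
lemma add_cancel:
  assumes o: "A\<in>Ob R" "B\<in>Ob R" and h: "f\<in>Hom R A B" "g\<in>Hom R A B" "k\<in>Hom R A B"
    and e: "f \<oplus> g = f \<oplus> k"
  shows "g = k"
proof -
  have "g = (ng f \<oplus> f) \<oplus> g" using zero_add[OF o h(2)] neg_add[OF o h(1)] by simp
  also have "\<dots> = ng f \<oplus> (f \<oplus> g)" using add_assoc[OF o neg_hom[OF o h(1)] h(1) h(2)] .
  also have "\<dots> = ng f \<oplus> (f \<oplus> k)" using e by simp
  also have "\<dots> = (ng f \<oplus> f) \<oplus> k" using add_assoc[OF o neg_hom[OF o h(1)] h(1) h(3)] by simp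
  also have "\<dots> = k" using zero_add[OF o h(3)] neg_add[OF o h(1)] by simp
  finally show ?thesis .
qed
lemma neg_unique:
  assumes o: "A\<in>Ob R" "B\<in>Ob R" and h: "f\<in>Hom R A B" "g\<in>Hom R A B" and e: "f \<oplus> g = z A B"
  shows "g = ng f"
  using add_cancel[OF o h(1) h(2) neg_hom[OF o h(1)]] e add_neg[OF o h(1)] by simp
lemma neg_neg: "\<lbrakk>A\<in>Ob R; B\<in>Ob R; f\<in>Hom R A B\<rbrakk> \<Longrightarrow> ng (ng f) = f"
  by (metis neg_add neg_hom neg_unique)
lemma neg_zero: "\<lbrakk>A\<in>Ob R; B\<in>Ob R\<rbrakk> \<Longrightarrow> ng (z A B) = z A B"
  by (metis add_zero neg_unique zero_hom)
lemma comp_zero_r: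
  assumes o: "A\<in>Ob R" "B\<in>Ob R" "C\<in>Ob R" and h: "f\<in>Hom R B C"
  shows "f \<cdot> z A B = z A C"
proof -
  have zh: "z A B \<in> Hom R A B" using zero_hom o by blast
  have fz: "f \<cdot> z A B \<in> Hom R A C" using comp_hom[OF o zh h] .
  have "f \<cdot> z A B = f \<cdot> (z A B \<oplus> z A B)" using add_zero[OF o(1,2) zh] by simp
  also have "\<dots> = f \<cdot> z A B \<oplus> f \<cdot> z A B" using comp_add_r[OF o zh zh h] .
  finally have 1: "f \<cdot> z A B \<oplus> z A C = f \<cdot> z A B \<oplus> f \<cdot> z A B" using add_zero[OF o(1,3) fz] by simp
  show ?thesis using add_cancel[OF o(1,3) fz zero_hom[OF o(1,3)] fz 1] by simp
qed
lemma comp_zero_l: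
  assumes o: "A\<in>Ob R" "B\<in>Ob R" "C\<in>Ob R" and h: "g\<in>Hom R A B"
  shows "z B C \<cdot> g = z A C"
proof -
  have zh: "z B C \<in> Hom R B C" using zero_hom o by blast
  have fz: "z B C \<cdot> g \<in> Hom R A C" using comp_hom[OF o h zh] .
  have "z B C \<cdot> g = (z B C \<oplus> z B C) \<cdot> g" using add_zero[OF o(2,3) zh] by simp
  also have "\<dots> = z B C \<cdot> g \<oplus> z B C \<cdot> g" using comp_add_l[OF o h zh zh] .
  finally have 1: "z B C \<cdot> g \<oplus> z A C = z B C \<cdot> g \<oplus> z B C \<cdot> g" using add_zero[OF o(1,3) fz] by simp
  show ?thesis using add_cancel[OF o(1,3) fz zero_hom[OF o(1,3)] fz 1] by simp
qed
lemma comp_neg_r: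
  assumes o: "A\<in>Ob R" "B\<in>Ob R" "C\<in>Ob R" and h: "f\<in>Hom R A B" "g\<in>Hom R B C"
  shows "g \<cdot> ng f = ng (g \<cdot> f)"
proof -
  have "g \<cdot> f \<oplus> g \<cdot> ng f = g \<cdot> (f \<oplus> ng f)" using comp_add_r[OF o h(1) neg_hom[OF o(1,2) h(1)] h(2)] by simp
  also have "\<dots> = z A C" using add_neg[OF o(1,2) h(1)] comp_zero_r[OF o h(2)] by simp
  finally show ?thesis using neg_unique[OF o(1,3) comp_hom[OF o h] comp_hom[OF o neg_hom[OF o(1,2) h(1)] h(2)]] by simp
qed
lemma comp_neg_l:
  assumes o: "A\<in>Ob R" "B\<in>Ob R" "C\<in>Ob R" and h: "f\<in>Hom R A B" "g\<in>Hom R B C"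
  shows "ng g \<cdot> f = ng (g \<cdot> f)"
proof -
  have "g \<cdot> f \<oplus> ng g \<cdot> f = (g \<oplus> ng g) \<cdot> f" using comp_add_l[OF o h(1) h(2) neg_hom[OF o(2,3) h(2)]] by simp
  also have "\<dots> = z A C" using add_neg[OF o(2,3) h(2)] comp_zero_l[OF o h(1)] by simp
  finally show ?thesis using neg_unique[OF o(1,3) comp_hom[OF o h] comp_hom[OF o h(1) neg_hom[OF o(2,3) h(2)]]] by simp
qed


lemma ex0:
  assumes T: "(A,B,C,f,g,h) \<in> Tri R" and W: "W\<in>Ob R" and u: "u\<in>Hom R W B" and gu: "g\<cdot>u = z W C"
  shows "\<exists>t\<in>Hom R W A. u = f\<cdot>t"
proof -
  note wt = tri_wt[OF T]
  have oA: "A\<in>Ob R" and oB: "B\<in>Ob R" and oC: "C\<in>Ob R" and hf: "f\<in>Hom R A B" using wt by auto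
  obtain Zr where Zr: "is_zero_obj R Zr" using zero_obj by blast
  have ZO: "Zr \<in> Ob R" using zero_obj_Ob[OF Zr] .
  have T1: "(W, Zr, SO W, z W Zr, z Zr (SO W), ng (S (idm R W))) \<in> Tri R" using tri_rot[OF tri_triv[OF W Zr]] .
  have T2: "(B, C, SO A, g, h, ng (S f)) \<in> Tri R" using tri_rot[OF T] .
  have b: "z Zr C \<in> Hom R Zr C" using zero_hom[OF ZO oC] .
  have cond: "z Zr C \<cdot> z W Zr = g \<cdot> u" using comp_zero_l[OF W ZO oC zero_hom[OF W ZO]] gu by simp
  obtain c where c: "c \<in> Hom R (SO W) (SO A)" "S u \<cdot> ng (S (idm R W)) = ng (S f) \<cdot> c"
    using tri_mor[OF T1 T2 u b cond] by blast
  have "c \<in> S ` Hom R W A" using sh_bij[OF W oA] c(1) unfolding bij_betw_def by blast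
  then obtain t where t: "t \<in> Hom R W A" "c = S t" by blast
  have SW: "SO W \<in> Ob R" and SA: "SO A \<in> Ob R" and SB: "SO B \<in> Ob R" using sh_ob W oA oB by auto
  have Su: "S u \<in> Hom R (SO W) (SO B)" using sh_hom[OF W oB u] .
  have Sf: "S f \<in> Hom R (SO A) (SO B)" using sh_hom[OF oA oB hf] .
  have "S u \<cdot> ng (S (idm R W)) = ng (S u \<cdot> idm R (SO W))"
    using comp_neg_r[OF SW SW SB id_hom[OF SW] Su] sh_id[OF W] by simp
  also have "\<dots> = ng (S u)" using id_r[OF SW SB Su] by simp
  finally have 1: "S u \<cdot> ng (S (idm R W)) = ng (S u)" .
  have "ng (S f) \<cdot> c = ng (S f \<cdot> S t)" using comp_neg_l[OF SW SA SB sh_hom[OF W oA t(1)] Sf] t(2) by simp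
  also have "\<dots> = ng (S (f \<cdot> t))" using sh_comp[OF W oA oB t(1) hf] by simp
  finally have "ng (S u) = ng (S (f \<cdot> t))" using 1 c(2) by simp
  hence "ng (ng (S u)) = ng (ng (S (f \<cdot> t)))" by simp
  hence "S u = S (f \<cdot> t)" using neg_neg[OF SW SB Su] neg_neg[OF SW SB sh_hom[OF W oB comp_hom[OF W oA oB t(1) hf]]] by simp
  moreover have "inj_on S (Hom R W B)" using sh_bij[OF W oB] unfolding bij_betw_def by blast
  ultimately have "u = f \<cdot> t" using u comp_hom[OF W oA oB t(1) hf] unfolding inj_on_def by blast
  thus ?thesis using t(1) by blast
qed

lemma exC:
  assumes T: "(A,B,C,f,g,h) \<in> Tri R" and W: "W\<in>Ob R" and u: "u\<in>Hom R W C" and hu: "h\<cdot>u = z W (SO A)"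
  shows "\<exists>t\<in>Hom R W B. u = g\<cdot>t"
  using ex0[OF tri_rot[OF T] W u hu] .

lemma endo_iso:
  assumes T: "(A,B,C,f,g,h) \<in> Tri R" and p: "p \<in> Hom R C C" and pg: "p\<cdot>g = g" and hp: "h\<cdot>p = h"
  shows "\<exists>q\<in>Hom R C C. q\<cdot>p = idm R C \<and> p\<cdot>q = idm R C"
proof -
  note wt = tri_wt[OF T]
  have oA: "A\<in>Ob R" and oB: "B\<in>Ob R" and oC: "C\<in>Ob R" and hg: "g\<in>Hom R B C" and hh: "h\<in>Hom R C (SO A)"
    using wt by auto
  have SA: "SO A \<in> Ob R" using sh_ob oA by auto
  have I: "idm R C \<in> Hom R C C" using id_hom[OF oC] .
  have nI: "ng (idm R C) \<in> Hom R C C" using neg_hom[OF oC oC I] .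
  define n where "n = p \<oplus> ng (idm R C)"
  have hn: "n \<in> Hom R C C" unfolding n_def using add_hom[OF oC oC p nI] .
  have "h \<cdot> n = h\<cdot>p \<oplus> h \<cdot> ng (idm R C)" unfolding n_def using comp_add_r[OF oC oC SA p nI hh] .
  also have "\<dots> = h \<oplus> ng h" using hp comp_neg_r[OF oC oC SA I hh] id_r[OF oC SA hh] by simp
  also have "\<dots> = z C (SO A)" using add_neg[OF oC SA hh] .
  finally have "h \<cdot> n = z C (SO A)" .
  then obtain s where s: "s \<in> Hom R C B" "n = g \<cdot> s" using exC[OF T oC hn] by blast
  have "n \<cdot> g = p\<cdot>g \<oplus> ng (idm R C) \<cdot> g" unfolding n_def using comp_add_l[OF oB oC oC hg p nI] .
  also have "\<dots> = g \<oplus> ng g" using pg comp_neg_l[OF oB oC oC hg I] id_l[OF oB oC hg] by simp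
  also have "\<dots> = z B C" using add_neg[OF oB oC hg] .
  finally have ng0: "n \<cdot> g = z B C" .
  have nn: "n \<cdot> n = z C C"
  proof -
    have "n \<cdot> n = n \<cdot> (g \<cdot> s)" using s(2) by simp
    also have "\<dots> = (n \<cdot> g) \<cdot> s" using assoc[OF oC oB oC oC s(1) hg hn] .
    also have "\<dots> = z C C" using ng0 comp_zero_l[OF oC oB oC s(1)] by simp
    finally show ?thesis .
  qed
  have nnh: "ng n \<in> Hom R C C" using neg_hom[OF oC oC hn] .
  have pe: "p = n \<oplus> idm R C"
  proof -
    have "n \<oplus> idm R C = p \<oplus> (ng (idm R C) \<oplus> idm R C)" unfolding n_def using add_assoc[OF oC oC p nI I] .
    also have "\<dots> = p" using neg_add[OF oC oC I] add_zero[OF oC oC p] by simp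
    finally show ?thesis by simp
  qed
  define q where "q = idm R C \<oplus> ng n"
  have hq: "q \<in> Hom R C C" unfolding q_def using add_hom[OF oC oC I nnh] .
  have nq: "n \<cdot> q = n"
  proof -
    have "n \<cdot> q = n \<cdot> idm R C \<oplus> n \<cdot> ng n" unfolding q_def using comp_add_r[OF oC oC oC I nnh hn] .
    also have "\<dots> = n \<oplus> ng (z C C)" using id_r[OF oC oC hn] comp_neg_r[OF oC oC oC hn hn] nn by simp
    also have "\<dots> = n" using neg_zero[OF oC oC] add_zero[OF oC oC hn] by simp
    finally show ?thesis .
  qed
  have qn: "q \<cdot> n = n"
  proof -
    have "q \<cdot> n = idm R C \<cdot> n \<oplus> ng n \<cdot> n" unfolding q_def using comp_add_l[OF oC oC oC hn I nnh] .
    also have "\<dots> = n \<oplus> ng (z C C)" using id_l[OF oC oC hn] comp_neg_l[OF oC oC oC hn hn] nn by simp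
    also have "\<dots> = n" using neg_zero[OF oC oC] add_zero[OF oC oC hn] by simp
    finally show ?thesis .
  qed
  have nqi: "n \<oplus> q = idm R C"
  proof -
    have "n \<oplus> q = n \<oplus> (ng n \<oplus> idm R C)" unfolding q_def using add_comm[OF oC oC I nnh] by simp
    also have "\<dots> = (n \<oplus> ng n) \<oplus> idm R C" using add_assoc[OF oC oC hn nnh I] by simp
    also have "\<dots> = idm R C" using add_neg[OF oC oC hn] zero_add[OF oC oC I] by simp
    finally show ?thesis .
  qed
  have "p \<cdot> q = n \<cdot> q \<oplus> idm R C \<cdot> q" using pe comp_add_l[OF oC oC oC hq hn I] by simp
  also have "\<dots> = idm R C" using nq id_l[OF oC oC hq] nqi by simp
  finally have 1: "p \<cdot> q = idm R C" .
  have "q \<cdot> p = q \<cdot> n \<oplus> q \<cdot> idm R C" using pe comp_add_r[OF oC oC oC hn I hq] by simp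
  also have "\<dots> = idm R C" using qn id_r[OF oC oC hq] nqi by simp
  finally have 2: "q \<cdot> p = idm R C" .
  show ?thesis using 1 2 hq by blast
qed


lemma iso_refl: "A\<in>Ob R \<Longrightarrow> isomorphic R A A"
  unfolding isomorphic_def iso_mor_def using id_hom id_l by blast
lemma iso_sym: "isomorphic R A B \<Longrightarrow> isomorphic R B A"
  unfolding isomorphic_def iso_mor_def by blast
lemma iso_trans:
  assumes "isomorphic R A B" "isomorphic R B C" shows "isomorphic R A C"
proof -
  obtain f f' where f: "f\<in>Hom R A B" "f'\<in>Hom R B A" "f'\<cdot>f = idm R A" "f\<cdot>f' = idm R B"
    and o: "A\<in>Ob R" "B\<in>Ob R" using assms(1) unfolding isomorphic_def iso_mor_def by blast
  obtain g g' where g: "g\<in>Hom R B C" "g'\<in>Hom R C B" "g'\<cdot>g = idm R B" "g\<cdot>g' = idm R C"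
    and oC: "C\<in>Ob R" using assms(2) unfolding isomorphic_def iso_mor_def by blast
  have gf: "g\<cdot>f \<in> Hom R A C" using comp_hom[OF o oC f(1) g(1)] .
  have fg: "f'\<cdot>g' \<in> Hom R C A" using comp_hom[OF oC o(2) o(1) g(2) f(2)] .
  have "(f'\<cdot>g')\<cdot>(g\<cdot>f) = f'\<cdot>(g'\<cdot>(g\<cdot>f))" using assoc[OF o(1) oC o(2) o(1) gf g(2) f(2)] by simp
  also have "\<dots> = f'\<cdot>((g'\<cdot>g)\<cdot>f)" using assoc[OF o oC o(2) f(1) g(1) g(2)] by simp
  also have "\<dots> = idm R A" using g(3) id_l[OF o f(1)] f(3) by simp
  finally have 1: "(f'\<cdot>g')\<cdot>(g\<cdot>f) = idm R A" .
  have "(g\<cdot>f)\<cdot>(f'\<cdot>g') = g\<cdot>(f\<cdot>(f'\<cdot>g'))" using assoc[OF oC o(1) o(2) oC fg f(1) g(1)] by simp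
  also have "\<dots> = g\<cdot>((f\<cdot>f')\<cdot>g')" using assoc[OF oC o(2) o(1) o(2) g(2) f(2) f(1)] by simp
  also have "\<dots> = idm R C" using f(4) id_l[OF oC o(2) g(2)] g(4) by simp
  finally have 2: "(g\<cdot>f)\<cdot>(f'\<cdot>g') = idm R C" .
  show ?thesis unfolding isomorphic_def iso_mor_def using 1 2 o oC comp_hom[OF o oC f(1) g(1)] comp_hom[OF oC o(2) o(1) g(2) f(2)] by blast
qed
lemma iso_sh: assumes "isomorphic R A B" shows "isomorphic R (SO A) (SO B)"
proof -
  obtain f f' where f: "f\<in>Hom R A B" "f'\<in>Hom R B A" "f'\<cdot>f = idm R A" "f\<cdot>f' = idm R B"
    and o: "A\<in>Ob R" "B\<in>Ob R" using assms(1) unfolding isomorphic_def iso_mor_def by blast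
  have "S f' \<cdot> S f = idm R (SO A)" using sh_comp[OF o o(1) f(1) f(2)] f(3) sh_id[OF o(1)] by simp
  moreover have "S f \<cdot> S f' = idm R (SO B)" using sh_comp[OF o(2) o(1) o(2) f(2) f(1)] f(4) sh_id[OF o(2)] by simp
  ultimately show ?thesis unfolding isomorphic_def iso_mor_def using sh_ob o sh_hom[OF o f(1)] sh_hom[OF o(2) o(1) f(2)] by blast
qed
lemma ob_shn: "A\<in>Ob R \<Longrightarrow> (shO R ^^ n) A \<in> Ob R"
  by (induction n) (auto simp: sh_ob)
lemma iso_shn: "isomorphic R A B \<Longrightarrow> isomorphic R ((shO R ^^ n) A) ((shO R ^^ n) B)"
  by (induction n) (auto simp: iso_sh)
lemma iso_desh:
  assumes "isomorphic R (SO A) (SO B)" "A\<in>Ob R" "B\<in>Ob R" shows "isomorphic R A B"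
proof -
  obtain F F' where F: "F\<in>Hom R (SO A) (SO B)" "F'\<in>Hom R (SO B) (SO A)" "F'\<cdot>F = idm R (SO A)" "F\<cdot>F' = idm R (SO B)"
    using assms(1) unfolding isomorphic_def iso_mor_def by blast
  obtain f where f: "f \<in> Hom R A B" "F = S f" using sh_bij[OF assms(2,3)] F(1) unfolding bij_betw_def by blast
  obtain f' where f': "f' \<in> Hom R B A" "F' = S f'" using sh_bij[OF assms(3,2)] F(2) unfolding bij_betw_def by blast
  have injA: "inj_on S (Hom R A A)" and injB: "inj_on S (Hom R B B)" using sh_bij assms(2,3) unfolding bij_betw_def by blast+
  have "S (f'\<cdot>f) = S (idm R A)" using sh_comp[OF assms(2,3,2) f(1) f'(1)] F(3) f(2) f'(2) sh_id[OF assms(2)] by simp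
  hence 1: "f'\<cdot>f = idm R A" using injA comp_hom[OF assms(2,3,2) f(1) f'(1)] id_hom[OF assms(2)] unfolding inj_on_def by blast
  have "S (f\<cdot>f') = S (idm R B)" using sh_comp[OF assms(3,2,3) f'(1) f(1)] F(4) f(2) f'(2) sh_id[OF assms(3)] by simp
  hence 2: "f\<cdot>f' = idm R B" using injB comp_hom[OF assms(3,2,3) f'(1) f(1)] id_hom[OF assms(3)] unfolding inj_on_def by blast
  show ?thesis unfolding isomorphic_def iso_mor_def using 1 2 f(1) f'(1) assms(2,3) by blast
qed

lemma cone_unique:
  assumes T: "(A,B,C,f,g,h) \<in> Tri R" and T': "(A',B',C',f',g',h') \<in> Tri R"
    and a: "iso_mor R A A' a" and b: "iso_mor R B B' b" and comm: "b\<cdot>f = f'\<cdot>a"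
  shows "isomorphic R C C'"
proof -
  note wt = tri_wt[OF T] and wt' = tri_wt[OF T']
  have oA: "A\<in>Ob R" and oB: "B\<in>Ob R" and oC: "C\<in>Ob R" and hf: "f\<in>Hom R A B" and hg: "g\<in>Hom R B C"
    and hh: "h\<in>Hom R C (SO A)" using wt by auto
  have oA': "A'\<in>Ob R" and oB': "B'\<in>Ob R" and oC': "C'\<in>Ob R" and hf': "f'\<in>Hom R A' B'" and hg': "g'\<in>Hom R B' C'"
    and hh': "h'\<in>Hom R C' (SO A')" using wt' by auto
  have SA: "SO A \<in> Ob R" and SA': "SO A' \<in> Ob R" using sh_ob oA oA' by auto
  obtain ai where ha: "a \<in> Hom R A A'" and hai: "ai \<in> Hom R A' A" and aia: "ai\<cdot>a = idm R A" and aai: "a\<cdot>ai = idm R A'"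
    using a unfolding iso_mor_def by blast
  obtain bi where hb: "b \<in> Hom R B B'" and hbi: "bi \<in> Hom R B' B" and bib: "bi\<cdot>b = idm R B" and bbi: "b\<cdot>bi = idm R B'"
    using b unfolding iso_mor_def by blast
  obtain c where c: "c \<in> Hom R C C'" "c\<cdot>g = g'\<cdot>b" "S a \<cdot> h = h' \<cdot> c" using tri_mor[OF T T' ha hb comm] by blast
  have comm': "bi\<cdot>f' = f\<cdot>ai"
  proof -
    have "bi\<cdot>f' = bi\<cdot>(f'\<cdot>(a\<cdot>ai))" using aai id_r[OF oA' oB' hf'] by simp
    also have "\<dots> = bi\<cdot>((f'\<cdot>a)\<cdot>ai)" using assoc[OF oA' oA oA' oB' hai ha hf'] by simp
    also have "\<dots> = bi\<cdot>((b\<cdot>f)\<cdot>ai)" using comm by simp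
    also have "\<dots> = (bi\<cdot>(b\<cdot>f))\<cdot>ai" using assoc[OF oA' oA oB' oB hai comp_hom[OF oA oB oB' hf hb] hbi] .
    also have "\<dots> = ((bi\<cdot>b)\<cdot>f)\<cdot>ai" using assoc[OF oA oB oB' oB hf hb hbi] by simp
    also have "\<dots> = f\<cdot>ai" using bib id_l[OF oA oB hf] by simp
    finally show ?thesis .
  qed
  obtain c' where c': "c' \<in> Hom R C' C" "c'\<cdot>g' = g\<cdot>bi" "S ai \<cdot> h' = h \<cdot> c'" using tri_mor[OF T' T hai hbi comm'] by blast
  have SaSai: "S ai \<cdot> S a = idm R (SO A)" using sh_comp[OF oA oA' oA ha hai] aia sh_id[OF oA] by simp
  have SaiSa: "S a \<cdot> S ai = idm R (SO A')" using sh_comp[OF oA' oA oA' hai ha] aai sh_id[OF oA'] by simp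
  have hSa: "S a \<in> Hom R (SO A) (SO A')" and hSai: "S ai \<in> Hom R (SO A') (SO A)" using sh_hom oA oA' ha hai by auto
  have p1: "(c'\<cdot>c)\<cdot>g = g"
  proof -
    have "(c'\<cdot>c)\<cdot>g = c'\<cdot>(c\<cdot>g)" using assoc[OF oB oC oC' oC hg c(1) c'(1)] by simp
    also have "\<dots> = (c'\<cdot>g')\<cdot>b" using c(2) assoc[OF oB oB' oC' oC hb hg' c'(1)] by simp
    also have "\<dots> = g\<cdot>(bi\<cdot>b)" using c'(2) assoc[OF oB oB' oB oC hb hbi hg] by simp
    also have "\<dots> = g" using bib id_r[OF oB oC hg] by simp
    finally show ?thesis .
  qed
  have p2: "h\<cdot>(c'\<cdot>c) = h"
  proof -
    have "h\<cdot>(c'\<cdot>c) = (h\<cdot>c')\<cdot>c" using assoc[OF oC oC' oC SA c(1) c'(1) hh] .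
    also have "\<dots> = (S ai \<cdot> h')\<cdot>c" using c'(3) by simp
    also have "\<dots> = S ai \<cdot> (h'\<cdot>c)" using assoc[OF oC oC' SA' SA c(1) hh' hSai] by simp
    also have "\<dots> = S ai \<cdot> (S a \<cdot> h)" using c(3) by simp
    also have "\<dots> = (S ai \<cdot> S a) \<cdot> h" using assoc[OF oC SA SA' SA hh hSa hSai] .
    also have "\<dots> = h" using SaSai id_l[OF oC SA hh] by simp
    finally show ?thesis .
  qed
  have q1: "(c\<cdot>c')\<cdot>g' = g'"
  proof -
    have "(c\<cdot>c')\<cdot>g' = c\<cdot>(c'\<cdot>g')" using assoc[OF oB' oC' oC oC' hg' c'(1) c(1)] by simp
    also have "\<dots> = (c\<cdot>g)\<cdot>bi" using c'(2) assoc[OF oB' oB oC oC' hbi hg c(1)] by simp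
    also have "\<dots> = g'\<cdot>(b\<cdot>bi)" using c(2) assoc[OF oB' oB oB' oC' hbi hb hg'] by simp
    also have "\<dots> = g'" using bbi id_r[OF oB' oC' hg'] by simp
    finally show ?thesis .
  qed
  have q2: "h'\<cdot>(c\<cdot>c') = h'"
  proof -
    have "h'\<cdot>(c\<cdot>c') = (h'\<cdot>c)\<cdot>c'" using assoc[OF oC' oC oC' SA' c'(1) c(1) hh'] .
    also have "\<dots> = (S a \<cdot> h)\<cdot>c'" using c(3) by simp
    also have "\<dots> = S a \<cdot> (h\<cdot>c')" using assoc[OF oC' oC SA SA' c'(1) hh hSa] by simp
    also have "\<dots> = S a \<cdot> (S ai \<cdot> h')" using c'(3) by simp
    also have "\<dots> = (S a \<cdot> S ai) \<cdot> h'" using assoc[OF oC' SA' SA SA' hh' hSai hSa] .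
    also have "\<dots> = h'" using SaiSa id_l[OF oC' SA' hh'] by simp
    finally show ?thesis .
  qed
  obtain u where u: "u \<in> Hom R C C" "u\<cdot>(c'\<cdot>c) = idm R C"
    using endo_iso[OF T comp_hom[OF oC oC' oC c(1) c'(1)] p1 p2] by blast
  obtain v where v: "v \<in> Hom R C' C'" "(c\<cdot>c')\<cdot>v = idm R C'"
    using endo_iso[OF T' comp_hom[OF oC' oC oC' c'(1) c(1)] q1 q2] by blast
  define L where "L = u\<cdot>c'"
  define Rr where "Rr = c'\<cdot>v"
  have hL: "L \<in> Hom R C' C" unfolding L_def using comp_hom[OF oC' oC oC c'(1) u(1)] .
  have hR: "Rr \<in> Hom R C' C" unfolding Rr_def using comp_hom[OF oC' oC' oC v(1) c'(1)] .
  have Lc: "L\<cdot>c = idm R C" unfolding L_def using assoc[OF oC oC' oC oC c(1) c'(1) u(1)] u(2) by simp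
  have cR: "c\<cdot>Rr = idm R C'" unfolding Rr_def using assoc[OF oC' oC' oC oC' v(1) c'(1) c(1)] v(2) by simp
  have "L = L\<cdot>(c\<cdot>Rr)" using cR id_r[OF oC' oC hL] by simp
  also have "\<dots> = (L\<cdot>c)\<cdot>Rr" using assoc[OF oC' oC oC' oC hR c(1) hL] .
  also have "\<dots> = Rr" using Lc id_l[OF oC' oC hR] by simp
  finally have "L = Rr" .
  hence "c\<cdot>L = idm R C'" using cR by simp
  thus ?thesis unfolding isomorphic_def iso_mor_def using c(1) hL Lc oC oC' by blast
qed


lemma tri3: "(A,B,C,f,g,h) \<in> Tri R \<Longrightarrow> (SO A, SO B, SO C, ng (S f), ng (S g), ng (S h)) \<in> Tri R"
  by (intro tri_rot)

lemma triob_shn: "(\<exists>f g h. (P,Q,C,f,g,h) \<in> Tri R) \<Longrightarrow> (\<exists>f g h. ((shO R ^^ n) P, (shO R ^^ n) Q, (shO R ^^ n) C, f, g, h) \<in> Tri R)"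
proof (induction n)
  case 0 thus ?case by simp
next
  case (Suc n)
  then obtain f g h where "((shO R ^^ n) P, (shO R ^^ n) Q, (shO R ^^ n) C, f, g, h) \<in> Tri R" by blast
  from tri3[OF this] show ?case by auto
qed

lemma core:
  "\<And>P Q C f g h P0 C0. (P,Q,C,f,g,h) \<in> Tri R \<Longrightarrow> P0\<in>Ob R \<Longrightarrow> C0\<in>Ob R \<Longrightarrow>
    isomorphic R P ((shO R ^^ t) P0) \<Longrightarrow> isomorphic R C ((shO R ^^ t) C0) \<Longrightarrow>
    \<exists>Q0\<in>Ob R. isomorphic R Q ((shO R ^^ t) Q0)"
proof (induction t)
  case 0
  have "Q \<in> Ob R" using tri_wt[OF 0(1)] by blast
  thus ?case using iso_refl[of Q] by auto
next
  case (Suc t P Q C f g h P0 C0)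
  note T = Suc(2)
  note wt = tri_wt[OF T]
  have oP: "P\<in>Ob R" and oQ: "Q\<in>Ob R" and oC: "C\<in>Ob R" and hf: "f\<in>Hom R P Q" using wt by auto
  define P1 where "P1 = (shO R ^^ t) P0"
  define C1' where "C1' = (shO R ^^ t) C0"
  have oP1: "P1 \<in> Ob R" unfolding P1_def using ob_shn Suc(3) .
  have oC1': "C1' \<in> Ob R" unfolding C1'_def using ob_shn Suc(4) .
  have isoP: "isomorphic R P (SO P1)" using Suc(5) unfolding P1_def by simp
  have isoC: "isomorphic R C (SO C1')" using Suc(6) unfolding C1'_def by simp
  have "P \<in> ess_image_shift R" unfolding ess_image_shift_def using oP oP1 isoP by blast
  moreover have "C \<in> ess_image_shift R" unfolding ess_image_shift_def using oC oC1' isoC by blast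
  ultimately have "Q \<in> ess_image_shift R" by (rule ess_closed[OF T])
  then obtain Q1 where oQ1: "Q1 \<in> Ob R" and isoQ: "isomorphic R Q (SO Q1)" unfolding ess_image_shift_def by blast
  have SP1: "SO P1 \<in> Ob R" and SQ1: "SO Q1 \<in> Ob R" using sh_ob oP1 oQ1 by auto
  obtain p p' where p: "p \<in> Hom R P (SO P1)" "p' \<in> Hom R (SO P1) P" "p'\<cdot>p = idm R P"
    and pi: "iso_mor R P (SO P1) p" using isoP unfolding isomorphic_def iso_mor_def by blast
  obtain q where q: "q \<in> Hom R Q (SO Q1)" and qi: "iso_mor R Q (SO Q1) q" using isoQ unfolding isomorphic_def iso_mor_def by blast
  define u where "u = q\<cdot>(f\<cdot>p')"
  have hu: "u \<in> Hom R (SO P1) (SO Q1)" unfolding u_def using comp_hom[OF SP1 oQ SQ1 comp_hom[OF SP1 oP oQ p(2) hf] q] .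
  have im: "S ` Hom R P1 Q1 = Hom R (SO P1) (SO Q1)" using sh_bij[OF oP1 oQ1] unfolding bij_betw_def by (rule conjunct2)
  have "ng u \<in> S ` Hom R P1 Q1" unfolding im by (rule neg_hom[OF SP1 SQ1 hu])
  then obtain f1 where f1': "ng u = S f1" "f1 \<in> Hom R P1 Q1" by (rule imageE)
  have f1: "f1 \<in> Hom R P1 Q1" "S f1 = ng u" using f1' by simp_all
  obtain C1 g1 h1 where T1: "(P1,Q1,C1,f1,g1,h1) \<in> Tri R" using tri_ex[OF oP1 oQ1 f1(1)] by blast
  have oC1: "C1 \<in> Ob R" using tri_wt[OF T1] by blast
  have comm: "q\<cdot>f = ng (S f1) \<cdot> p"
  proof -
    have "ng (S f1) \<cdot> p = u \<cdot> p" using f1(2) neg_neg[OF SP1 SQ1 hu] by simp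
    also have "\<dots> = q\<cdot>((f\<cdot>p')\<cdot>p)" unfolding u_def
      using assoc[OF oP SP1 oQ SQ1 p(1) comp_hom[OF SP1 oP oQ p(2) hf] q] by simp
    also have "\<dots> = q\<cdot>(f\<cdot>(p'\<cdot>p))" using assoc[OF oP SP1 oP oQ p(1) p(2) hf] by simp
    also have "\<dots> = q\<cdot>f" using p(3) id_r[OF oP oQ hf] by simp
    finally show ?thesis by simp
  qed
  have "isomorphic R C (SO C1)" using cone_unique[OF T tri3[OF T1] pi qi comm] .
  hence "isomorphic R (SO C1) (SO C1')" using iso_trans[OF iso_sym isoC] by blast
  hence isoC1: "isomorphic R C1 C1'" using iso_desh[OF _ oC1 oC1'] by blast
  have isP1: "isomorphic R P1 ((shO R ^^ t) P0)" using iso_refl[OF oP1] by (simp add: P1_def)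
  obtain Q0 where oQ0: "Q0 \<in> Ob R" and isoQ1: "isomorphic R Q1 ((shO R ^^ t) Q0)"
    using Suc.IH[OF T1 Suc(3) Suc(4) isP1 isoC1[unfolded C1'_def]] by blast
  have "isomorphic R (SO Q1) ((shO R ^^ Suc t) Q0)" using iso_sh[OF isoQ1] by simp
  thus ?case using oQ0 iso_trans[OF isoQ] by blast
qed


lemma shn_hom: "\<lbrakk>A\<in>Ob R; B\<in>Ob R; f \<in> Hom R A B\<rbrakk> \<Longrightarrow> (shM R ^^ n) f \<in> Hom R ((shO R ^^ n) A) ((shO R ^^ n) B)"
  by (induction n) (auto intro: sh_hom ob_shn)
lemma shn_id: "A\<in>Ob R \<Longrightarrow> (shM R ^^ n) (idm R A) = idm R ((shO R ^^ n) A)"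
  by (induction n) (auto simp: sh_id ob_shn)

lemma lvl_shift:
  assumes "k \<le> j" "j \<le> snd X" shows "(shO R ^^ nat (j - k)) (lvl R j X) = lvl R k X"
proof -
  have e: "nat (snd X - k) = nat (j - k) + nat (snd X - j)" using assms by simp
  show ?thesis unfolding lvl_def e funpow_add by simp
qed
lemma lvl_ob: "fst X \<in> Ob R \<Longrightarrow> lvl R k X \<in> Ob R"
  unfolding lvl_def by (rule ob_shn)

lemma S1:
  assumes "S_iso R X Y a"
  shows "\<exists>j. j \<le> snd X \<and> j \<le> snd Y \<and> (\<forall>k\<le>j. isomorphic R (lvl R k X) (lvl R k Y))"
proof -
  obtain b where Sa: "S_hom R X Y a" and Sb: "S_hom R Y X b"
    and e1: "S_eq R (S_comp R b a) (S_id R X)" and e2: "S_eq R (S_comp R a b) (S_id R Y)"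
    using assms unfolding S_iso_def by blast
  obtain ka f where a: "a = (ka, f)" by (cases a)
  obtain kb g where b: "b = (kb, g)" by (cases b)
  have oX: "fst X \<in> Ob R" and oY: "fst Y \<in> Ob R" using Sa unfolding S_hom_def S_obj_def by auto
  have ka: "ka \<le> snd X" "ka \<le> snd Y" and hf: "f \<in> Hom R (lvl R ka X) (lvl R ka Y)"
    using Sa a unfolding S_hom_def by auto
  have kb: "kb \<le> snd X" "kb \<le> snd Y" and hg: "g \<in> Hom R (lvl R kb Y) (lvl R kb X)"
    using Sb b unfolding S_hom_def by auto
  define j where "j = min ka kb"
  have jle: "j \<le> ka" "j \<le> kb" unfolding j_def by auto
  define F where "F = (shM R ^^ nat (ka - j)) f"
  define G where "G = (shM R ^^ nat (kb - j)) g"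
  have oXj: "lvl R j X \<in> Ob R" and oYj: "lvl R j Y \<in> Ob R" using lvl_ob oX oY by auto
  have hF: "F \<in> Hom R (lvl R j X) (lvl R j Y)"
    using shn_hom[OF lvl_ob[OF oX] lvl_ob[OF oY] hf, of "nat (ka - j)"] lvl_shift[OF jle(1) ka(1)] lvl_shift[OF jle(1) ka(2)]
    unfolding F_def by simp
  have hG: "G \<in> Hom R (lvl R j Y) (lvl R j X)"
    using shn_hom[OF lvl_ob[OF oY] lvl_ob[OF oX] hg, of "nat (kb - j)"] lvl_shift[OF jle(2) kb(1)] lvl_shift[OF jle(2) kb(2)]
    unfolding G_def by simp
  have idX: "(shM R ^^ nat (snd X - j)) (idm R (fst X)) = idm R (lvl R j X)"
    using shn_id[OF oX] unfolding lvl_def by simp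
  have idY: "(shM R ^^ nat (snd Y - j)) (idm R (fst Y)) = idm R (lvl R j Y)"
    using shn_id[OF oY] unfolding lvl_def by simp
  have jX: "min j (snd X) = j" and jY: "min j (snd Y) = j" using jle ka by auto
  have 1: "G \<cdot> F = idm R (lvl R j X)"
    using e1 idX jX unfolding S_eq_def S_comp_def S_id_def at_lvl_def a b Let_def F_def G_def j_def by simp
  have jj: "min kb ka = j" unfolding j_def by simp
  have 2: "F \<cdot> G = idm R (lvl R j Y)"
    using e2 idY jY jj unfolding S_eq_def S_comp_def S_id_def at_lvl_def a b Let_def F_def G_def by simp
  have iso: "isomorphic R (lvl R j X) (lvl R j Y)"
    unfolding isomorphic_def iso_mor_def using 1 2 hF hG oXj oYj by blast
  have "\<forall>k\<le>j. isomorphic R (lvl R k X) (lvl R k Y)"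
  proof (intro allI impI)
    fix k assume "k \<le> j"
    thus "isomorphic R (lvl R k X) (lvl R k Y)"
      using iso_shn[OF iso, of "nat (j - k)"] lvl_shift[of k j X] lvl_shift[of k j Y] jle ka by simp
  qed
  thus ?thesis using jle ka by (intro exI[of _ j]) auto
qed

lemma S2:
  assumes "fst Y \<in> Ob R" "fst W \<in> Ob R" "k \<le> snd Y" "k \<le> snd W" "isomorphic R (lvl R k Y) (lvl R k W)"
  shows "S_isomorphic R Y W"
proof -
  obtain f g where f: "f \<in> Hom R (lvl R k Y) (lvl R k W)" "g \<in> Hom R (lvl R k W) (lvl R k Y)"
    "g\<cdot>f = idm R (lvl R k Y)" "f\<cdot>g = idm R (lvl R k W)"
    using assms(5) unfolding isomorphic_def iso_mor_def by blast
  have idY: "(shM R ^^ nat (snd Y - k)) (idm R (fst Y)) = idm R (lvl R k Y)"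
    using shn_id[OF assms(1)] unfolding lvl_def by simp
  have idW: "(shM R ^^ nat (snd W - k)) (idm R (fst W)) = idm R (lvl R k W)"
    using shn_id[OF assms(2)] unfolding lvl_def by simp
  have "S_iso R Y W (k, f)"
    unfolding S_iso_def
  proof (intro conjI exI[of _ "(k, g)"])
    show "S_hom R Y W (k, f)" "S_hom R W Y (k, g)" unfolding S_hom_def S_obj_def using assms f by auto
    show "S_eq R (S_comp R (k, g) (k, f)) (S_id R Y)"
      unfolding S_eq_def S_comp_def S_id_def at_lvl_def Let_def using f(3) idY assms(3) by simp
    show "S_eq R (S_comp R (k, f) (k, g)) (S_id R W)"
      unfolding S_eq_def S_comp_def S_id_def at_lvl_def Let_def using f(4) idW assms(4) by simp
  qed
  thus ?thesis unfolding S_isomorphic_def by blast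
qed


lemma main:
  assumes tri: "S_tri R X Y Z x y zz" and iX: "in_R R X" and iZ: "in_R R Z"
  shows "in_R R Y"
proof -
  obtain X' Y' Z' x' y' z' a b c where std: "S_std_tri R X' Y' Z' x' y' z'"
    and ia: "S_iso R X X' a" and ib: "S_iso R Y Y' b" and ic: "S_iso R Z Z' c"
    using tri unfolding S_tri_def by blast
  obtain k x0 y0 z0 where kX: "k \<le> snd X'" and kY: "k \<le> snd Y'" and kZ: "k \<le> snd Z'"
    and T: "(lvl R k X', lvl R k Y', lvl R k Z', sgn_mor R k x0, sgn_mor R k y0, sgn_mor R k z0) \<in> Tri R"
    using std unfolding S_std_tri_def by blast
  have oY: "fst Y \<in> Ob R" using tri unfolding S_tri_def S_hom_def S_obj_def by blast
  obtain A0 aa where oA0: "A0 \<in> Ob R" and iaa: "S_iso R X (A0, 0) aa"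
    using iX unfolding in_R_def S_isomorphic_def by blast
  obtain C0 cc where oC0: "C0 \<in> Ob R" and icc: "S_iso R Z (C0, 0) cc"
    using iZ unfolding in_R_def S_isomorphic_def by blast
  obtain j1 where j1: "\<forall>k\<le>j1. isomorphic R (lvl R k X) (lvl R k X')" using S1[OF ia] by blast
  obtain j2 where j2: "j2 \<le> 0" "\<forall>k\<le>j2. isomorphic R (lvl R k X) (lvl R k (A0,0))" using S1[OF iaa] by auto
  obtain j3 where j3: "j3 \<le> snd Y" "\<forall>k\<le>j3. isomorphic R (lvl R k Y) (lvl R k Y')" using S1[OF ib] by blast
  obtain j4 where j4: "\<forall>k\<le>j4. isomorphic R (lvl R k Z) (lvl R k Z')" using S1[OF ic] by blast
  obtain j5 where j5: "\<forall>k\<le>j5. isomorphic R (lvl R k Z) (lvl R k (C0,0))" using S1[OF icc] by blast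
  define K where "K = min k (min j1 (min j2 (min j3 (min j4 j5))))"
  have K: "K \<le> k" "K \<le> j1" "K \<le> j2" "K \<le> j3" "K \<le> j4" "K \<le> j5" "K \<le> 0" using j2(1) unfolding K_def by auto
  define t where "t = nat (- K)"
  have lv0: "\<And>B. lvl R K (B, 0) = (shO R ^^ t) B" unfolding lvl_def t_def by simp
  have "\<exists>f g h. (lvl R k X', lvl R k Y', lvl R k Z', f, g, h) \<in> Tri R" using T by blast
  from triob_shn[OF this, of "nat (k - K)"]
  obtain f g h where T': "(lvl R K X', lvl R K Y', lvl R K Z', f, g, h) \<in> Tri R"
    using lvl_shift[OF K(1) kX] lvl_shift[OF K(1) kY] lvl_shift[OF K(1) kZ] by auto
  have isoP: "isomorphic R (lvl R K X') ((shO R ^^ t) A0)"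
    using iso_trans[OF iso_sym[OF j1[rule_format, OF K(2)]] j2(2)[rule_format, OF K(3)]] lv0 by simp
  have isoC: "isomorphic R (lvl R K Z') ((shO R ^^ t) C0)"
    using iso_trans[OF iso_sym[OF j4[rule_format, OF K(5)]] j5[rule_format, OF K(6)]] lv0 by simp
  obtain Q0 where oQ0: "Q0 \<in> Ob R" and isoQ: "isomorphic R (lvl R K Y') ((shO R ^^ t) Q0)"
    using core[OF T' oA0 oC0 isoP isoC] by blast
  have "isomorphic R (lvl R K Y) (lvl R K (Q0, 0))"
    using iso_trans[OF j3(2)[rule_format, OF K(4)] isoQ] lv0 by simp
  hence "S_isomorphic R Y (Q0, 0)" using S2[of Y "(Q0,0)" K] oY oQ0 K j3(1) by simp
  thus ?thesis unfolding in_R_def using oQ0 by blast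
qed

end

theorem mainTheorem14:
  fixes R :: "('o, 'm) rtcat"
  assumes "right_triangulated R"
    and "right_semi_equivalence R"
    and "S_tri R X Y Z x y z"
    and "in_R R X"
    and "in_R R Z"
  shows "in_R R Y"
proof -
  interpret RTS R using assms(1,2) by unfold_locales
  show ?thesis using main assms(3-5) by blast
qed

end
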